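(* Let $d,k$ be positive integers, $N=d^k$, and let $A\in\mathbb{Z}_{\geq0}^{N\times d}$ be an $(N,d)$-complete consecutive integers matrix. Then $A$ is completely mixable and $$\gamma(A)=\beta(A)=d+\sum_{i=0}^{d-1}\sum_{j=1}^{k} i\cdot d^{j-1}=:a_d(k).$$
   Context: For $A\in\mathbb{R}^{m\times d}$ and $\Pi=(\pi_1,\dots,\pi_d)\in\mathfrak{S}(m)^d$ (where $\mathfrak{S}(m)$ is the symmetric group on $\{1,\dots,m\}$), $A^\Pi$ denotes the matrix with $A^\Pi_{i,j}=A_{\pi_j^{-1}(i),j}$. Define $\gamma(A)=\min_{\Pi}\max_{i}\sum_{j=1}^d A^\Pi_{i,j}$ and $\beta(A)=\max_{\Pi}\min_{i}\sum_{j=1}^d A^\Pi_{i,j}$; $A$ is completely mixable if $\gamma(A)=\beta(A)$. For $d,N\in\mathbb{Z}_{\geq0}$ let $a=(1,\dots,N)^\top$; any matrix $A^\Pi$ obtained from $(a,\dots,a)\in\mathbb{Z}^{N\times d}$ by permutations $\Pi\in\mathfrak{S}(N)^d$ of the columns' entries is called an $(N,d)$-complete consecutive integers matrix. *)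

theory Defs
  imports "HOL-Combinatorics.Permutations"
begin

text \<open>An m x d matrix is a function nat => nat => int, read only at indices
  i < m (rows, 0-based) and j < d (columns, 0-based).\<close>

definition perm_tuple :: "nat \<Rightarrow> nat \<Rightarrow> (nat \<Rightarrow> nat \<Rightarrow> nat) \<Rightarrow> bool" where
  "perm_tuple m d P \<longleftrightarrow> (\<forall>j<d. P j permutes {..<m})"

definition permute_cols :: "(nat \<Rightarrow> nat \<Rightarrow> int) \<Rightarrow> (nat \<Rightarrow> nat \<Rightarrow> nat) \<Rightarrow> nat \<Rightarrow> nat \<Rightarrow> int" where
  "permute_cols A P i j = A (inv (P j) i) j"

definition row_sum :: "nat \<Rightarrow> (nat \<Rightarrow> nat \<Rightarrow> int) \<Rightarrow> nat \<Rightarrow> int" where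
  "row_sum d A i = (\<Sum>j<d. A i j)"

definition gamma :: "nat \<Rightarrow> nat \<Rightarrow> (nat \<Rightarrow> nat \<Rightarrow> int) \<Rightarrow> int" where
  "gamma m d A = Min {Max {row_sum d (permute_cols A P) i | i. i < m} | P. perm_tuple m d P}"

definition beta :: "nat \<Rightarrow> nat \<Rightarrow> (nat \<Rightarrow> nat \<Rightarrow> int) \<Rightarrow> int" where
  "beta m d A = Max {Min {row_sum d (permute_cols A P) i | i. i < m} | P. perm_tuple m d P}"

definition completely_mixable :: "nat \<Rightarrow> nat \<Rightarrow> (nat \<Rightarrow> nat \<Rightarrow> int) \<Rightarrow> bool" where
  "completely_mixable m d A \<longleftrightarrow> gamma m d A = beta m d A"

text \<open>(N,d)-complete consecutive integers matrix: obtained from (a,...,a) with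
  a = (1,...,N)^T (row i, 0-based, has entry i+1) by column permutations.\<close>
definition cci_matrix :: "nat \<Rightarrow> nat \<Rightarrow> (nat \<Rightarrow> nat \<Rightarrow> int) \<Rightarrow> bool" where
  "cci_matrix N d A \<longleftrightarrow> (\<exists>P. perm_tuple N d P \<and>
     (\<forall>i<N. \<forall>j<d. A i j = permute_cols (\<lambda>i j. int i + 1) P i j))"

end

theory Submission imports Defs begin

fun g :: "nat \<Rightarrow> nat \<Rightarrow> nat \<Rightarrow> nat \<Rightarrow> nat" where
  "g d j 0 r = r"
| "g d j (Suc k) r = (r mod d + j) mod d + d * g d j k (r div d)"

lemma mod_cancel_aux: "(a + j) mod (d::nat) = (b + j) mod d \<Longrightarrow> a mod d = b mod d"
  by (simp add: nat_mod_eq_iff)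

lemma g_lt: "d > 0 \<Longrightarrow> r < d ^ k \<Longrightarrow> g d j k r < d ^ k"
proof (induction k arbitrary: r)
  case 0 then show ?case by simp
next
  case (Suc k)
  have b: "g d j k (r div d) < d ^ k"
    using Suc by (simp add: less_mult_imp_div_less mult.commute)
  have a: "(r mod d + j) mod d < d" using Suc by simp
  have "d * g d j k (r div d) + d \<le> d * d ^ k"
    using b by (metis Suc_leI mult_Suc_right mult_le_mono2 add.commute plus_1_eq_Suc)
  then show ?case using a by simp
qed

lemma g_inj: "d > 0 \<Longrightarrow> inj_on (g d j k) {..<d ^ k}"
proof (induction k)
  case 0 then show ?case by simp
next
  case (Suc k)
  show ?case
  proof (rule inj_onI)
    fix x y assume x: "x \<in> {..<d ^ Suc k}" and y: "y \<in> {..<d ^ Suc k}"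
      and e: "g d j (Suc k) x = g d j (Suc k) y"
    have e1: "(x mod d + j) mod d = (y mod d + j) mod d"
      using e Suc.prems by (metis g.simps(2) mod_less_divisor mod_mult_self2 mod_mod_trivial mult.commute)
    have m: "x mod d = y mod d" using mod_cancel_aux[OF e1] by simp
    have e2: "g d j k (x div d) = g d j k (y div d)"
      using e e1 Suc.prems by simp
    have "x div d < d ^ k" "y div d < d ^ k" using x y Suc.prems
      by (auto simp add: less_mult_imp_div_less mult.commute)
    then have "x div d = y div d" using Suc.IH Suc.prems e2 by (auto dest: inj_onD)
    then show "x = y" using m by (metis div_mult_mod_eq)
  qed
qed

lemma shift_sum: "d > 0 \<Longrightarrow> (\<Sum>j<d. (a + j) mod d) = (\<Sum>i<(d::nat). i)"
proof -
  assume d: "d > 0"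
  let ?f = "\<lambda>j. (a + j) mod d"
  have inj: "inj_on ?f {..<d}"
    by (rule inj_onI) (metis lessThan_iff mod_cancel_aux add.commute mod_less)
  have im: "?f ` {..<d} = {..<d}"
    by (rule endo_inj_surj) (use inj d in auto)
  have "(\<Sum>j<d. ?f j) = (\<Sum>i\<in>?f ` {..<d}. i)" by (simp add: sum.reindex[OF inj])
  then show ?thesis using im by (simp add: id_def)
qed

lemma g_sum: "d > 0 \<Longrightarrow> r < d ^ k \<Longrightarrow> (\<Sum>j<d. g d j k r) = (\<Sum>i<d. i) * (\<Sum>t<k. d ^ t)"
proof (induction k arbitrary: r)
  case 0 then show ?case by (simp add: sum.swap)
next
  case (Suc k)
  have "(\<Sum>j<d. g d j (Suc k) r) = (\<Sum>j<d. (r mod d + j) mod d) + d * (\<Sum>j<d. g d j k (r div d))"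
    by (simp add: sum.distrib sum_distrib_left)
  also have "\<dots> = (\<Sum>i<d. i) + d * ((\<Sum>i<d. i) * (\<Sum>t<k. d ^ t))"
    using Suc shift_sum by (simp add: less_mult_imp_div_less mult.commute)
  also have "\<dots> = (\<Sum>i<d. i) * (\<Sum>t<Suc k. d ^ t)"
  proof -
    have "(\<Sum>t<Suc k. d ^ t) = 1 + d * (\<Sum>t<k. d ^ t)"
      unfolding sum.lessThan_Suc_shift by (simp add: sum_distrib_left)
    then show ?thesis by (simp add: algebra_simps)
  qed
  finally show ?case .
qed

lemma sum_shift1: "(\<Sum>j\<in>{1..k}. (x::int) ^ (j - 1)) = (\<Sum>t<k. x ^ t)"
  by (induction k) (auto simp: atLeastAtMostSuc_conv)


lemma total_sum:
  assumes "perm_tuple N d P"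
  shows "(\<Sum>i<N. row_sum d (permute_cols A P) i) = (\<Sum>j<d. \<Sum>i<N. A i j)"
proof -
  have "(\<Sum>i<N. row_sum d (permute_cols A P) i) = (\<Sum>j<d. \<Sum>i<N. A (inv (P j) i) j)"
    unfolding row_sum_def permute_cols_def by (rule sum.swap)
  also have "\<dots> = (\<Sum>j<d. \<Sum>i<N. A i j)"
  proof (rule sum.cong[OF refl])
    fix j assume "j \<in> {..<d}"
    then have p: "inv (P j) permutes {..<N}" using assms permutes_inv unfolding perm_tuple_def by auto
    have "(\<Sum>i<N. A (inv (P j) i) j) = (\<Sum>i\<in>inv (P j) ` {..<N}. A i j)"
      by (simp add: sum.reindex[OF permutes_inj_on[OF p]])
    then show "(\<Sum>i<N. A (inv (P j) i) j) = (\<Sum>i<N. A i j)" using permutes_image[OF p] by simp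
  qed
  finally show ?thesis .
qed

lemma row_bound:
  assumes "perm_tuple N d P" "i < N"
  shows "\<bar>row_sum d (permute_cols A P) i\<bar> \<le> (\<Sum>j<d. \<Sum>i<N. \<bar>A i j\<bar>)"
proof -
  have "\<bar>row_sum d (permute_cols A P) i\<bar> \<le> (\<Sum>j<d. \<bar>A (inv (P j) i) j\<bar>)"
    unfolding row_sum_def permute_cols_def by (rule sum_abs)
  also have "\<dots> \<le> (\<Sum>j<d. \<Sum>i<N. \<bar>A i j\<bar>)"
  proof (rule sum_mono)
    fix j assume "j \<in> {..<d}"
    then have p: "inv (P j) permutes {..<N}" using assms permutes_inv unfolding perm_tuple_def by auto
    have "inv (P j) i \<in> {..<N}" using permutes_image[OF p] assms(2) by auto
    then show "\<bar>A (inv (P j) i) j\<bar> \<le> (\<Sum>i<N. \<bar>A i j\<bar>)"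
      by (rule member_le_sum[where f="\<lambda>i. \<bar>A i j\<bar>"]) auto
  qed
  finally show ?thesis .
qed

theorem theorem3:
  fixes d k N :: nat and A :: "nat \<Rightarrow> nat \<Rightarrow> int"
  assumes "d > 0" and "k > 0" and "N = d ^ k"
    and "cci_matrix N d A"
  shows "completely_mixable N d A
    \<and> gamma N d A = int d + (\<Sum>i<d. \<Sum>j\<in>{1..k}. int i * int d ^ (j - 1))
    \<and> beta N d A = int d + (\<Sum>i<d. \<Sum>j\<in>{1..k}. int i * int d ^ (j - 1))"
proof -
  note d = assms(1)
  obtain Q where Q: "perm_tuple N d Q"
    and QA: "\<And>i j. i < N \<Longrightarrow> j < d \<Longrightarrow> A i j = int (inv (Q j) i) + 1"
    using assms(4) unfolding cci_matrix_def permute_cols_def by auto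
  define c where "c = int d + (\<Sum>i<d. \<Sum>j\<in>{1..k}. int i * int d ^ (j - 1))"
  have c_eq: "c = int d + int ((\<Sum>i<d. i) * (\<Sum>t<k. d ^ t))"
  proof -
    have "(\<Sum>i<d. \<Sum>j\<in>{1..k}. int i * int d ^ (j - 1)) = (\<Sum>i<d. int i * (\<Sum>t<k. int d ^ t))"
      using sum_shift1[of "int d" k] by (simp only: sum_distrib_left[symmetric])
    also have "\<dots> = int ((\<Sum>i<d. i) * (\<Sum>t<k. d ^ t))"
      by (simp add: sum_distrib_right)
    finally show ?thesis unfolding c_def by simp
  qed
  define G where "G j = (\<lambda>r. if r < N then g d j k r else r)" for j
  have Gp: "G j permutes {..<N}" for j
  proof (rule bij_imp_permutes)
    have inj: "inj_on (G j) {..<N}"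
      using g_inj[OF d, of j k] assms(3) unfolding G_def by (simp add: inj_on_def)
    have "G j ` {..<N} \<subseteq> {..<N}" using g_lt[OF d] assms(3) unfolding G_def by auto
    then have "G j ` {..<N} = {..<N}" using endo_inj_surj[OF _ _ inj] by simp
    then show "bij_betw (G j) {..<N} {..<N}" by (rule bij_betw_imageI[OF inj])
  next
    fix x assume "x \<notin> {..<N}" then show "G j x = x" unfolding G_def by simp
  qed
  define P0 where "P0 j = inv (Q j \<circ> G j)" for j
  have P0: "perm_tuple N d P0"
    unfolding perm_tuple_def P0_def
    using Q Gp by (auto simp: perm_tuple_def intro!: permutes_inv permutes_compose)
  have rows: "row_sum d (permute_cols A P0) i = c" if i: "i < N" for i
  proof -
    have "permute_cols A P0 i j = int (g d j k i) + 1" if j: "j < d" for j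
    proof -
      have qp: "Q j permutes {..<N}" using Q j unfolding perm_tuple_def by auto
      have "inv (P0 j) = Q j \<circ> G j"
        unfolding P0_def by (rule permutes_inv_inv[OF permutes_compose[OF Gp qp]])
      then have "inv (P0 j) i = Q j (g d j k i)" using i unfolding G_def by simp
      moreover have "g d j k i < N" using g_lt[OF d] i assms(3) by simp
      ultimately show ?thesis unfolding permute_cols_def
        using QA[of "Q j (g d j k i)" j] j permutes_inverses(2)[OF qp] permutes_in_image[OF qp]
        by auto
    qed
    then have "row_sum d (permute_cols A P0) i = (\<Sum>j<d. int (g d j k i) + 1)"
      unfolding row_sum_def by simp
    also have "\<dots> = int (\<Sum>j<d. g d j k i) + int d" by (simp add: sum.distrib)
    also have "\<dots> = c" using g_sum[OF d, of i k] i assms(3) c_eq by simp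
    finally show ?thesis .
  qed
  define T where "T = (\<Sum>j<d. \<Sum>i<N. A i j)"
  have N0: "N > 0" using assms(3) d by simp
  have T: "T = int N * c"
    using total_sum[OF P0, of A] rows unfolding T_def by simp
  define R where "R P = {row_sum d (permute_cols A P) i | i. i < N}" for P
  have Rfin: "finite (R P)" and Rne: "R P \<noteq> {}" for P
    unfolding R_def using N0 by auto
  have Rsum: "(\<Sum>i<N. row_sum d (permute_cols A P) i) = T" if "perm_tuple N d P" for P
    using total_sum[OF that] unfolding T_def by simp
  have maxge: "Max (R P) \<ge> c" if P: "perm_tuple N d P" for P
  proof -
    have "T \<le> of_nat (card {..<N}) * Max (R P)"
      unfolding Rsum[OF P, symmetric]
      by (rule sum_bounded_above, rule Max_ge[OF Rfin]) (auto simp: R_def)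
    then have "int N * c \<le> int N * Max (R P)" using T by simp
    then show ?thesis using N0 by simp
  qed
  have minle: "Min (R P) \<le> c" if P: "perm_tuple N d P" for P
  proof -
    have "of_nat (card {..<N}) * Min (R P) \<le> T"
      unfolding Rsum[OF P, symmetric]
      by (rule sum_bounded_below, rule Min_le[OF Rfin]) (auto simp: R_def)
    then have "int N * Min (R P) \<le> int N * c" using T by simp
    then show ?thesis using N0 by simp
  qed
  define M where "M = (\<Sum>j<d. \<Sum>i<N. \<bar>A i j\<bar>)"
  have Rb: "x \<in> {-M..M}" if xR: "x \<in> R P" and pP: "perm_tuple N d P" for x P
  proof -
    obtain i where i: "i < N" "x = row_sum d (permute_cols A P) i" using xR unfolding R_def by auto
    show ?thesis using row_bound[OF pP i(1), of A] i(2) unfolding M_def by (simp add: abs_le_iff)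
  qed
  have R0: "R P0 = {c}" unfolding R_def using rows N0 by auto
  have gam: "gamma N d A = c"
  proof -
    have e: "{Max {row_sum d (permute_cols A P) i | i. i < N} | P. perm_tuple N d P}
        = {Max (R P) | P. perm_tuple N d P}" unfolding R_def by simp
    show ?thesis unfolding gamma_def e
    proof (rule Min_eqI)
      show "finite {Max (R P) | P. perm_tuple N d P}"
      proof (rule finite_subset[of _ "{-M..M}"])
        show "{Max (R P) | P. perm_tuple N d P} \<subseteq> {-M..M}"
        proof
          fix x assume "x \<in> {Max (R P) | P. perm_tuple N d P}"
          then obtain P where "perm_tuple N d P" "x = Max (R P)" by blast
          then show "x \<in> {-M..M}" using Rb[of x P] Max_in[OF Rfin Rne] by simp
        qed
      qed simp
      have "Max (R P0) = c" using R0 by simp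
      then show "c \<in> {Max (R P) | P. perm_tuple N d P}" using P0 by blast
    qed (use maxge in auto)
  qed
  have bet: "beta N d A = c"
  proof -
    have e: "{Min {row_sum d (permute_cols A P) i | i. i < N} | P. perm_tuple N d P}
        = {Min (R P) | P. perm_tuple N d P}" unfolding R_def by simp
    show ?thesis unfolding beta_def e
    proof (rule Max_eqI)
      show "finite {Min (R P) | P. perm_tuple N d P}"
      proof (rule finite_subset[of _ "{-M..M}"])
        show "{Min (R P) | P. perm_tuple N d P} \<subseteq> {-M..M}"
        proof
          fix x assume "x \<in> {Min (R P) | P. perm_tuple N d P}"
          then obtain P where "perm_tuple N d P" "x = Min (R P)" by blast
          then show "x \<in> {-M..M}" using Rb[of x P] Min_in[OF Rfin Rne] by simp
        qed
      qed simp
      have "Min (R P0) = c" using R0 by simp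
      then show "c \<in> {Min (R P) | P. perm_tuple N d P}" using P0 by blast
    qed (use minle in auto)
  qed
  show ?thesis using gam bet unfolding completely_mixable_def c_def by simp
qed

end
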